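(* Let $d\ge1$, $\ell\ge2$ and $n\ge1$ be integers, $N=(d-1)\ell+2$, and $t=\gcd(d+1,2(\ell-1))$. There exists a $(d+1)$-angulation $\mathscr{T}$ of $P_N$ with $\rho^{n(d-1)}(\mathscr{T})=\mathscr{T}$ if and only if $N\mid 2n$ or $N\mid tn$.
   Context: $P_N$ is a regular $N$-gon with corners labelled $0,\dots,N-1$ clockwise; $[x,y]=[y,x]$ denotes the segment between corners $x,y$. A $(d-1)$-diagonal of $P_N$ is a segment $[x,y]$ ($0\le x,y\le N-1$) with $|y-x|>1$ and $(d-1)\mid(|y-x|-1)$ (equivalently, a diagonal cutting $P_N$ into a $((d-1)\ell'+2)$-gon and a $((d-1)(\ell-\ell')+2)$-gon with $1<\ell'<\ell$). A partial $(d+1)$-angulation is a set of pairwise non-crossing $(d-1)$-diagonals; a $(d+1)$-angulation is a maximal one under inclusion. $\rho$ is rotation one step anticlockwise: $\rho([x,y])=[x-1,y-1]$, indices modulo $N$, extended to sets of diagonals. *)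

theory Defs
  imports Main
begin

definition is_diag :: "nat \<Rightarrow> nat \<Rightarrow> nat set \<Rightarrow> bool" where
  "is_diag d N D \<longleftrightarrow> (\<exists>x y. D = {x, y} \<and> x < y \<and> y < N \<and> y - x > 1 \<and> y - x < N - 1
      \<and> (d - 1) dvd (y - x - 1))"

definition interleave :: "nat set \<Rightarrow> nat set \<Rightarrow> bool" where
  "interleave D E \<longleftrightarrow> (\<exists>a b c e. D = {a, b} \<and> E = {c, e} \<and> a < c \<and> c < b \<and> b < e)"

definition crosses :: "nat set \<Rightarrow> nat set \<Rightarrow> bool" where
  "crosses D E \<longleftrightarrow> interleave D E \<or> interleave E D"

definition partial_angulation :: "nat \<Rightarrow> nat \<Rightarrow> nat set set \<Rightarrow> bool" where
  "partial_angulation d N T \<longleftrightarrow> (\<forall>D\<in>T. is_diag d N D) \<and> (\<forall>D\<in>T. \<forall>E\<in>T. \<not> crosses D E)"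

definition angulation :: "nat \<Rightarrow> nat \<Rightarrow> nat set set \<Rightarrow> bool" where
  "angulation d N T \<longleftrightarrow> partial_angulation d N T \<and>
     (\<forall>T'. partial_angulation d N T' \<and> T \<subseteq> T' \<longrightarrow> T' = T)"

text \<open>rho: rotation one step anticlockwise, x \<mapsto> x - 1 mod N.\<close>
definition rho :: "nat \<Rightarrow> nat set \<Rightarrow> nat set" where
  "rho N D = (\<lambda>x. (x + N - 1) mod N) ` D"

definition rho_set :: "nat \<Rightarrow> nat set set \<Rightarrow> nat set set" where
  "rho_set N T = rho N ` T"

end

theory Submission
  imports Defs
begin


definition goodI :: "nat \<Rightarrow> nat \<Rightarrow> nat \<Rightarrow> nat \<times> nat \<Rightarrow> bool" where
  "goodI m a b E \<longleftrightarrow> a \<le> fst E \<and> fst E < snd E \<and> snd E \<le> b \<and> 2 \<le> snd E - fst E \<and> m dvd (snd E - fst E - 1)"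

definition nc :: "nat \<times> nat \<Rightarrow> nat \<times> nat \<Rightarrow> bool" where
  "nc E E' \<longleftrightarrow> \<not> (fst E < fst E' \<and> fst E' < snd E \<and> snd E < snd E') \<and>
               \<not> (fst E' < fst E \<and> fst E < snd E' \<and> snd E' < snd E)"

definition lam :: "(nat \<times> nat) set \<Rightarrow> bool" where
  "lam F \<longleftrightarrow> (\<forall>E\<in>F. \<forall>E'\<in>F. nc E E')"

lemma fam_finite:
  assumes "\<forall>E\<in>F. goodI m a b E" shows "finite F"
proof -
  have "F \<subseteq> {..b} \<times> {..b}" using assms by (auto simp: goodI_def)
  then show ?thesis by (rule finite_subset) auto
qed

lemma div_arith1:
  fixes A B C m :: nat
  assumes "m \<ge> 1" "m dvd (B - 1)" "B \<ge> 2"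
  shows "(A - 1) div m + (B - 1) div m + (C - 1) div m \<le> (A + B + C - 1) div m"
proof -
  have e: "A + B + C - 1 = (B - 1) + (A + C)" using assms by simp
  have "(A + B + C - 1) div m = (B - 1) div m + (A + C) div m"
    unfolding e using assms(2) by (simp add: div_plus_div_distrib_dvd_left)
  moreover have "(A - 1) div m + (C - 1) div m \<le> (A + C) div m"
  proof -
    have "((A - 1) div m + (C - 1) div m) * m \<le> (A - 1) + (C - 1)"
      by (simp add: add_mult_distrib add_mono)
    also have "\<dots> \<le> A + C" by simp
    finally have "((A - 1) div m + (C - 1) div m) * m \<le> A + C" .
    then show ?thesis using assms(1)
      by (metis div_le_mono nonzero_mult_div_cancel_right not_one_le_zero)
  qed
  ultimately show ?thesis by simp
qed

lemma div_arith2: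
  fixes A B C m :: nat
  assumes "m \<ge> 1" "m dvd (B - 1)" "B \<ge> 2" "m dvd (A + B + C - 1)" "A + C \<ge> 1"
  shows "1 + (A - 1) div m + (B - 1) div m + (C - 1) div m \<le> (A + B + C - 1) div m"
proof -
  have e: "A + B + C - 1 = (B - 1) + (A + C)" using assms by simp
  have dv: "m dvd A + C" using assms(2,4) e by (metis dvd_add_right_iff)
  then obtain K where K: "A + C = m * K" by blast
  have "(A + B + C - 1) div m = (B - 1) div m + (A + C) div m"
    unfolding e using assms(2) by (simp add: div_plus_div_distrib_dvd_left)
  moreover have "1 + (A - 1) div m + (C - 1) div m \<le> (A + C) div m"
  proof -
    have "((A - 1) div m + (C - 1) div m) * m \<le> (A - 1) + (C - 1)"
      by (simp add: add_mult_distrib add_mono)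
    also have "\<dots> < A + C" using assms(5) by linarith
    finally have "((A - 1) div m + (C - 1) div m) * m < m * K" using K by simp
    then have "(A - 1) div m + (C - 1) div m < K" by (simp add: mult.commute)
    then show ?thesis using K assms(1) by simp
  qed
  ultimately show ?thesis by simp
qed

lemma lam_subset: "lam F \<Longrightarrow> G \<subseteq> F \<Longrightarrow> lam G"
  unfolding lam_def by blast

lemma boundA_aux:
  assumes "m \<ge> 1"
  shows "b - a = n \<Longrightarrow> \<forall>E\<in>F. goodI m a b E \<Longrightarrow> lam F \<Longrightarrow> card F \<le> (b - a - 1) div m"
proof (induction n arbitrary: a b F rule: less_induct)
  case (less n)
  have finF: "finite F" using less.prems(2) by (rule fam_finite)
  define F' where "F' = F - {(a,b)}"
  show ?case
  proof (cases "F' = {}")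
    case True
    then have sub: "F \<subseteq> {(a,b)}" unfolding F'_def by blast
    show ?thesis
    proof (cases "(a,b) \<in> F")
      case True
      then have g: "goodI m a b (a,b)" using less.prems(2) by blast
      then have "m dvd (b - a - 1)" "b - a - 1 \<ge> 1" by (auto simp: goodI_def)
      then have "(b - a - 1) div m \<ge> 1"
      proof -
        obtain c where c: "b - a - 1 = m * c" using \<open>m dvd (b - a - 1)\<close> by blast
        then have "c \<ge> 1" using \<open>b - a - 1 \<ge> 1\<close> by (cases c) auto
        then show ?thesis using c assms by simp
      qed
      moreover have "card F \<le> 1"
      proof -
        have "card F \<le> card {(a,b)}" using sub by (intro card_mono) auto
        then show ?thesis by simp
      qed
      ultimately show ?thesis by simp
    next
      case False
      then have "F = {}" using sub by blast
      then show ?thesis by simp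
    qed
  next
    case False
    have finF': "finite F'" using finF F'_def by simp
    define len where "len = (\<lambda>E::nat\<times>nat. snd E - fst E)"
    have "Max (len ` F') \<in> len ` F'" using finF' False by (intro Max_in) auto
    then obtain D where DF': "D \<in> F'" and DM: "len D = Max (len ` F')" by auto
    have Dmax: "\<forall>E\<in>F'. len E \<le> len D" unfolding DM using finF' by auto
    obtain x y where D: "D = (x,y)" by (cases D)
    have DF: "D \<in> F" and Dne: "D \<noteq> (a,b)" using DF' F'_def by auto
    have gD: "goodI m a b D" using less.prems(2) DF by blast
    then have xy: "a \<le> x" "x < y" "y \<le> b" "2 \<le> y - x" "m dvd (y - x - 1)"
      by (auto simp: goodI_def D)
    define FL where "FL = {E\<in>F. snd E \<le> x}"
    define FM where "FM = {E\<in>F. x \<le> fst E \<and> snd E \<le> y}"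
    define FR where "FR = {E\<in>F. y \<le> fst E}"
    have cover: "F \<subseteq> {(a,b)} \<union> FL \<union> FM \<union> FR"
    proof
      fix E assume EF: "E \<in> F"
      show "E \<in> {(a,b)} \<union> FL \<union> FM \<union> FR"
      proof (cases "E = (a,b)")
        case True then show ?thesis by simp
      next
        case False
        then have "E \<in> F'" using EF F'_def by simp
        then have le: "len E \<le> len D" using Dmax by blast
        have ncE: "nc D E" using less.prems(3) DF EF unfolding lam_def by blast
        obtain u v where E: "E = (u,v)" by (cases E)
        have "u < v" using less.prems(2) EF E by (auto simp: goodI_def)
        then have "v \<le> x \<or> (x \<le> u \<and> v \<le> y) \<or> y \<le> u"
          using le ncE xy unfolding E D len_def nc_def by auto
        then show ?thesis using EF E unfolding FL_def FM_def FR_def by auto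
      qed
    qed
    have gL: "\<forall>E\<in>FL. goodI m a x E" using less.prems(2) unfolding FL_def goodI_def by auto
    have gM: "\<forall>E\<in>FM. goodI m x y E" using less.prems(2) unfolding FM_def goodI_def by auto
    have gR: "\<forall>E\<in>FR. goodI m y b E" using less.prems(2) unfolding FR_def goodI_def by auto
    have lL: "lam FL" "lam FM" "lam FR" using less.prems(3)
      by (auto intro: lam_subset simp: FL_def FM_def FR_def)
    have nxy: "y - x < n" using xy Dne D less.prems(1) by auto
    have cL: "card FL \<le> (x - a - 1) div m"
      using less.IH[of "x - a" x a FL] gL lL xy less.prems(1) by auto
    have cM: "card FM \<le> (y - x - 1) div m"
      using less.IH[of "y - x" y x FM] gM lL nxy by auto
    have cR: "card FR \<le> (b - y - 1) div m"
      using less.IH[of "b - y" b y FR] gR lL xy less.prems(1) by auto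
    have fins: "finite FL" "finite FM" "finite FR" using finF by (auto simp: FL_def FM_def FR_def)
    have c1: "card F \<le> card ({(a,b)} \<inter> F) + card FL + card FM + card FR"
    proof -
      have "F \<subseteq> ({(a,b)} \<inter> F) \<union> FL \<union> FM \<union> FR" using cover by blast
      then have "card F \<le> card (({(a,b)} \<inter> F) \<union> FL \<union> FM \<union> FR)"
        using fins by (intro card_mono) auto
      also have "\<dots> \<le> card ({(a,b)} \<inter> F) + card FL + card FM + card FR"
        by (smt (verit) add_le_mono card_Un_le le_trans order_refl)
      finally show ?thesis .
    qed
    have ar: "b - a = (x - a) + (y - x) + (b - y)" using xy by simp
    show ?thesis
    proof (cases "(a,b) \<in> F")
      case True
      have "m dvd (b - a - 1)" using less.prems(2) True by (auto simp: goodI_def)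
      have s: "x - a + (y - x) + (b - y) - 1 = b - a - 1" using xy by linarith
      have ac: "x - a + (b - y) \<ge> 1" using Dne D xy by auto
      have "1 + (x - a - 1) div m + (y - x - 1) div m + (b - y - 1) div m \<le> (x - a + (y - x) + (b - y) - 1) div m"
        by (rule div_arith2) (use xy assms ac s \<open>m dvd (b - a - 1)\<close> in auto)
      then have "1 + (x - a - 1) div m + (y - x - 1) div m + (b - y - 1) div m \<le> (b - a - 1) div m"
        unfolding s .
      moreover have "card ({(a,b)} \<inter> F) = 1" using True by simp
      ultimately show ?thesis using c1 cL cM cR by linarith
    next
      case False
      have s: "x - a + (y - x) + (b - y) - 1 = b - a - 1" using xy by linarith
      have "(x - a - 1) div m + (y - x - 1) div m + (b - y - 1) div m \<le> (x - a + (y - x) + (b - y) - 1) div m"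
        by (rule div_arith1) (use xy assms in auto)
      then have "(x - a - 1) div m + (y - x - 1) div m + (b - y - 1) div m \<le> (b - a - 1) div m"
        unfolding s .
      moreover have "card ({(a,b)} \<inter> F) = 0" using False by simp
      ultimately show ?thesis using c1 cL cM cR by linarith
    qed
  qed
qed

lemma boundA:
  assumes "m \<ge> 1" "\<forall>E\<in>F. goodI m a b E" "lam F"
  shows "card F \<le> (b - a - 1) div m"
  using boundA_aux[OF assms(1) refl assms(2,3)] .

definition col :: "nat \<Rightarrow> nat \<Rightarrow> nat \<Rightarrow> nat" where
  "col x y z = (if z \<le> x then z else z - (y - x - 1))"
definition unc :: "nat \<Rightarrow> nat \<Rightarrow> nat \<Rightarrow> nat" where
  "unc x y z = (if z \<le> x then z else z + (y - x - 1))"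
definition mapP :: "(nat \<Rightarrow> nat) \<Rightarrow> nat \<times> nat \<Rightarrow> nat \<times> nat" where
  "mapP f E = (f (fst E), f (snd E))"

lemma unc_col: "x < y \<Longrightarrow> z \<le> x \<or> y \<le> z \<Longrightarrow> unc x y (col x y z) = z"
  unfolding unc_def col_def by auto
lemma col_unc: "x < y \<Longrightarrow> col x y (unc x y z) = z"
  unfolding unc_def col_def by auto
lemma unc_out: "x < y \<Longrightarrow> unc x y z \<le> x \<or> y \<le> unc x y z"
  unfolding unc_def by auto
lemma unc_mono: "x < y \<Longrightarrow> unc x y z < unc x y w \<longleftrightarrow> z < w"
  unfolding unc_def by auto
lemma col_mono: "x < y \<Longrightarrow> z \<le> x \<or> y \<le> z \<Longrightarrow> w \<le> x \<or> y \<le> w \<Longrightarrow> col x y z < col x y w \<longleftrightarrow> z < w"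
  unfolding col_def by auto
lemma col_le: "x < y \<Longrightarrow> z \<le> x \<or> y \<le> z \<Longrightarrow> w \<le> x \<or> y \<le> w \<Longrightarrow> z \<le> w \<Longrightarrow> col x y z \<le> col x y w"
  unfolding col_def by auto

lemma nc_map:
  assumes "\<And>p q. p \<in> S \<Longrightarrow> q \<in> S \<Longrightarrow> f p < f q \<longleftrightarrow> p < q"
    "fst E \<in> S" "snd E \<in> S" "fst E' \<in> S" "snd E' \<in> S"
  shows "nc (mapP f E) (mapP f E') \<longleftrightarrow> nc E E'"
  unfolding nc_def mapP_def using assms by auto

lemma nc_inside:
  assumes "x \<le> p" "p < q" "q \<le> y" "u \<le> x \<or> y \<le> u" "v \<le> x \<or> y \<le> v"
  shows "nc (p,q) (u,v)"
  unfolding nc_def using assms by auto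

lemma boundB_aux:
  assumes "m \<ge> 1"
  shows "b - a = n \<Longrightarrow> b - a = m * L + 1 \<Longrightarrow> L \<ge> 1 \<Longrightarrow> \<forall>E\<in>F. goodI m a b E \<Longrightarrow> lam F
     \<Longrightarrow> (a,b) \<in> F \<Longrightarrow> (\<forall>E. goodI m a b E \<and> (\<forall>E'\<in>F. nc E E') \<longrightarrow> E \<in> F) \<Longrightarrow> L \<le> card F"
proof (induction n arbitrary: a b F L rule: less_induct)
  case (less n)
  have finF: "finite F" using less.prems(4) by (rule fam_finite)
  have ab: "a < b" using less.prems(2) by simp
  show ?case
  proof (cases "L = 1")
    case True
    have "card F \<noteq> 0" using finF less.prems(6) by auto
    then show ?thesis using True by simp
  next
    case False
    then have L2: "L \<ge> 2" using less.prems(3) by simp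
    define F' where "F' = F - {(a,b)}"
    have F'ne: "F' \<noteq> {}"
    proof
      assume F'e: "F' = {}"
      define E0 where "E0 = (a, a + m + 1)"
      have "m * L \<ge> m * 2" using L2 by simp
      then have "a + m + 1 \<le> b" using less.prems(2) by linarith
      then have "goodI m a b E0" unfolding E0_def goodI_def using assms by simp
      moreover have "\<forall>E'\<in>F. nc E0 E'" using F'e unfolding F'_def E0_def nc_def by auto
      ultimately have "E0 \<in> F" using less.prems(7) by blast
      then have "E0 = (a,b)" using F'e F'_def by auto
      then have "b = a + m + 1" unfolding E0_def by simp
      then have "m * L = m * 1" using less.prems(2) by linarith
      then show False using assms False by simp
    qed
    have finF': "finite F'" using finF F'_def by simp
    define len where "len = (\<lambda>E::nat\<times>nat. snd E - fst E)"
    have "Max (len ` F') \<in> len ` F'" using finF' F'ne by (intro Max_in) auto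
    then obtain D where DF': "D \<in> F'" and DM: "len D = Max (len ` F')" by auto
    have Dmax: "\<forall>E\<in>F'. len E \<le> len D" unfolding DM using finF' by auto
    obtain x y where D: "D = (x,y)" by (cases D)
    have DF: "D \<in> F" and Dne: "D \<noteq> (a,b)" using DF' F'_def by auto
    have gD: "goodI m a b D" using less.prems(4) DF by blast
    then have xy: "a \<le> x" "x < y" "y \<le> b" "2 \<le> y - x" "m dvd (y - x - 1)"
      by (auto simp: goodI_def D)
    obtain c where c: "y - x - 1 = m * c" using xy(5) by blast
    have c1: "c \<ge> 1"
    proof (rule ccontr)
      assume "\<not> c \<ge> 1"
      then have "c = 0" by simp
      then show False using c xy(4) by simp
    qed
    have yx: "y - x = m * c + 1" using c xy(4) by simp
    have yxlt: "y - x < b - a" using xy Dne D by auto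
    then have cL: "c < L" using yx less.prems(2) by simp
    define out where "out = (\<lambda>z::nat. z \<le> x \<or> y \<le> z)"
    have cover: "\<And>E. E \<in> F \<Longrightarrow> E = (a,b) \<or> snd E \<le> x \<or> (x \<le> fst E \<and> snd E \<le> y) \<or> y \<le> fst E"
    proof -
      fix E assume EF: "E \<in> F"
      show "E = (a,b) \<or> snd E \<le> x \<or> (x \<le> fst E \<and> snd E \<le> y) \<or> y \<le> fst E"
      proof (cases "E = (a,b)")
        case True then show ?thesis by simp
      next
        case False
        then have "E \<in> F'" using EF F'_def by simp
        then have le: "len E \<le> len D" using Dmax by blast
        have ncE: "nc D E" using less.prems(5) DF EF unfolding lam_def by blast
        obtain u v where E: "E = (u,v)" by (cases E)
        have "u < v" using less.prems(4) EF E by (auto simp: goodI_def)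
        then have "v \<le> x \<or> (x \<le> u \<and> v \<le> y) \<or> y \<le> u"
          using le ncE xy unfolding E D len_def nc_def by auto
        then show ?thesis using E by auto
      qed
    qed
    define FM where "FM = {E\<in>F. x \<le> fst E \<and> snd E \<le> y}"
    define FO where "FO = F - FM"
    have FOout: "\<And>E. E \<in> FO \<Longrightarrow> out (fst E) \<and> out (snd E) \<and> fst E < snd E"
    proof -
      fix E assume EO: "E \<in> FO"
      then have EF: "E \<in> F" and nM: "E \<notin> FM" using FO_def by auto
      have lt: "fst E < snd E" using less.prems(4) EF by (auto simp: goodI_def)
      from cover[OF EF] nM lt xy show "out (fst E) \<and> out (snd E) \<and> fst E < snd E"
        unfolding out_def FM_def using EF by auto
    qed
    have abO: "(a,b) \<in> FO" using less.prems(6) Dne D xy unfolding FO_def FM_def by auto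
    have gM: "\<forall>E\<in>FM. goodI m x y E" using less.prems(4) unfolding FM_def goodI_def by auto
    have lM: "lam FM" using less.prems(5) by (auto intro: lam_subset simp: FM_def)
    have DM': "(x,y) \<in> FM" using DF D FM_def by auto
    have maxM: "\<forall>E. goodI m x y E \<and> (\<forall>E'\<in>FM. nc E E') \<longrightarrow> E \<in> FM"
    proof (intro allI impI)
      fix E assume H: "goodI m x y E \<and> (\<forall>E'\<in>FM. nc E E')"
      have gE: "goodI m a b E" using H xy unfolding goodI_def by auto
      have "\<forall>E'\<in>F. nc E E'"
      proof
        fix E' assume E'F: "E' \<in> F"
        show "nc E E'"
        proof (cases "E' \<in> FM")
          case True then show ?thesis using H by blast
        next
          case False
          then have "E' \<in> FO" using E'F FO_def by simp
          then have "out (fst E') \<and> out (snd E')" using FOout by blast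
          then show ?thesis using H nc_inside[of x "fst E" "snd E" y "fst E'" "snd E'"]
            unfolding out_def goodI_def by auto
        qed
      qed
      then have "E \<in> F" using less.prems(7) gE by blast
      then show "E \<in> FM" using H unfolding FM_def goodI_def by auto
    qed
    have ltn: "y - x < n" using yxlt less.prems(1) by simp
    have IHM: "c \<le> card FM"
      using less.IH[OF ltn refl yx c1 gM lM DM' maxM] .
    define b' where "b' = b - (y - x - 1)"
    define G where "G = mapP (col x y) ` FO"
    have b'x: "b' > x" using xy b'_def by simp
    have colb: "col x y b = b'" unfolding col_def b'_def using xy by auto
    have cola: "col x y a = a" unfolding col_def using xy by auto
    have b'a: "b' - a = m * (L - c) + 1"
    proof -
      have e1: "m * (L - c) = m * L - m * c" by (simp add: diff_mult_distrib2)
      have e2: "m * c \<le> m * L" using cL by simp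
      show ?thesis using less.prems(2) xy c b'_def e1 e2 by linarith
    qed
    have outS: "\<And>p q. p \<in> Collect out \<Longrightarrow> q \<in> Collect out \<Longrightarrow> col x y p < col x y q \<longleftrightarrow> p < q"
      using col_mono xy(2) unfolding out_def by auto
    have gG: "\<forall>E\<in>G. goodI m a b' E"
    proof
      fix E' assume "E' \<in> G"
      then obtain E where EO: "E \<in> FO" and E': "E' = mapP (col x y) E" using G_def by auto
      obtain u v where E: "E = (u,v)" by (cases E)
      have ou: "out u" "out v" "u < v" using FOout[OF EO] E by auto
      have EF: "E \<in> F" using EO FO_def by simp
      have gE: "goodI m a b E" using EF less.prems(4) by blast
      then have uv: "a \<le> u" "v \<le> b" "2 \<le> v - u" "m dvd (v - u - 1)" unfolding goodI_def E by auto
      have EnD: "E \<noteq> (x,y)" using EO DM' FO_def by auto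
      have 1: "a \<le> col x y u" using uv xy ou unfolding col_def out_def by auto
      have 2: "col x y u < col x y v" using col_mono[of x y u v] xy ou unfolding out_def by auto
      have 3: "col x y v \<le> b'" using col_le[of x y v b] xy ou uv colb unfolding out_def by auto
      have 45: "2 \<le> col x y v - col x y u \<and> m dvd (col x y v - col x y u - 1)"
      proof (cases "u \<le> x \<and> y \<le> v")
        case True
        then have "col x y v - col x y u = (v - u - 1) - (y - x - 1) + 1"
          using xy unfolding col_def by auto
        moreover have gt: "v - u > y - x" using True EnD E xy by auto
        moreover have d: "m dvd (v - u - 1) - (y - x - 1)" by (rule dvd_diff_nat[OF uv(4) xy(5)])
        moreover have "(v - u - 1) - (y - x - 1) \<ge> 1" using gt xy by linarith
        ultimately show ?thesis by simp
      next
        case False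
        then have "col x y v - col x y u = v - u"
          using xy ou unfolding col_def out_def by auto
        then show ?thesis using uv by simp
      qed
      show "goodI m a b' E'" unfolding goodI_def E' E mapP_def using 1 2 3 45 by simp
    qed
    have lG: "lam G"
      unfolding lam_def G_def
    proof (intro ballI, elim imageE)
      fix E1 E2 X1 X2 assume X1: "X1 \<in> FO" "E1 = mapP (col x y) X1" and X2: "X2 \<in> FO" "E2 = mapP (col x y) X2"
      have "nc X1 X2" using less.prems(5) X1 X2 unfolding FO_def lam_def by auto
      then show "nc E1 E2" using nc_map[of "Collect out" "col x y" X1 X2] outS FOout X1 X2 by auto
    qed
    have abG: "(a,b') \<in> G" using abO cola colb unfolding G_def mapP_def by force
    have maxG: "\<forall>E'. goodI m a b' E' \<and> (\<forall>E''\<in>G. nc E' E'') \<longrightarrow> E' \<in> G"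
    proof (intro allI impI)
      fix E' assume H: "goodI m a b' E' \<and> (\<forall>E''\<in>G. nc E' E'')"
      obtain u' v' where E': "E' = (u',v')" by (cases E')
      have uv': "a \<le> u'" "u' < v'" "v' \<le> b'" "2 \<le> v' - u'" "m dvd (v' - u' - 1)"
        using H unfolding goodI_def E' by auto
      define E where "E = mapP (unc x y) E'"
      have Eout: "out (fst E)" "out (snd E)" using unc_out xy(2) unfolding E_def mapP_def out_def by auto
      have uncb: "unc x y b' = b" unfolding unc_def b'_def using xy b'x by auto
      have gE: "goodI m a b E"
      proof -
        have 1: "a \<le> unc x y u'" using uv' unfolding unc_def by auto
        have 2: "unc x y u' < unc x y v'" using uv' unc_mono xy(2) by blast
        have 3: "unc x y v' \<le> b" using uv' uncb unc_mono[of x y b' v'] xy(2) by force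
        have 45: "2 \<le> unc x y v' - unc x y u' \<and> m dvd (unc x y v' - unc x y u' - 1)"
        proof (cases "u' \<le> x \<and> x < v'")
          case True
          then have "unc x y v' - unc x y u' - 1 = (v' - u' - 1) + (y - x - 1)"
            using uv' unfolding unc_def by auto
          moreover have "unc x y v' - unc x y u' \<ge> v' - u'" using True unfolding unc_def by auto
          moreover have "m dvd (v' - u' - 1) + (y - x - 1)" using uv'(5) xy(5) by (rule dvd_add)
          ultimately show ?thesis using uv'(4) by simp
        next
          case False
          then have "unc x y v' - unc x y u' = v' - u'"
            using uv' unfolding unc_def by auto
          then show ?thesis using uv' by simp
        qed
        show ?thesis unfolding goodI_def E_def mapP_def E' using 1 2 3 45 by simp
      qed
      have ncE: "\<forall>E''\<in>F. nc E E''"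
      proof
        fix E'' assume E''F: "E'' \<in> F"
        show "nc E E''"
        proof (cases "E'' \<in> FM")
          case True
          then have "x \<le> fst E''" "fst E'' < snd E''" "snd E'' \<le> y"
            using gM unfolding goodI_def by auto
          then have "nc E'' E" using nc_inside[of x "fst E''" "snd E''" y "fst E" "snd E"] Eout
            unfolding out_def by auto
          then show ?thesis unfolding nc_def by auto
        next
          case False
          then have EO: "E'' \<in> FO" using E''F FO_def by simp
          then have "nc E' (mapP (col x y) E'')" using H G_def by blast
          moreover have "mapP (unc x y) (mapP (col x y) E'') = E''"
          proof -
            obtain p q where pq: "E'' = (p,q)" by (cases E'')
            have "out p" "out q" using FOout[OF EO] pq by auto
            then have "unc x y (col x y p) = p" "unc x y (col x y q) = q"
              using unc_col[OF xy(2)] unfolding out_def by auto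
            then show ?thesis unfolding mapP_def pq by simp
          qed
          ultimately show "nc E E''"
            using nc_map[of UNIV "unc x y" E' "mapP (col x y) E''"] unc_mono[OF xy(2)] E_def by auto
        qed
      qed
      have EF: "E \<in> F" using less.prems(7) gE ncE by blast
      have EnM: "E \<notin> FM"
      proof
        assume "E \<in> FM"
        then have i: "x \<le> unc x y u'" "unc x y v' \<le> y" unfolding FM_def E_def E' mapP_def by auto
        have "unc x y u' < unc x y v'" using uv' unc_mono xy(2) by blast
        then have "unc x y u' = x" "unc x y v' = y" using i Eout unfolding out_def E_def E' mapP_def by auto
        then have "u' = x" "v' = x + 1" using xy(2) uv' unfolding unc_def by (auto split: if_splits)
        then show False using uv' by simp
      qed
      have "E \<in> FO" using EF EnM FO_def by simp
      moreover have "mapP (col x y) E = E'" unfolding E_def E' mapP_def using col_unc[OF xy(2)] by simp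
      ultimately show "E' \<in> G" unfolding G_def by force
    qed
    have ltn': "b' - a < n" using less.prems(1) xy b'_def by simp
    have Lc: "L - c \<ge> 1" using cL by simp
    have IHG: "L - c \<le> card G"
      using less.IH[OF ltn' refl b'a Lc gG lG abG maxG] .
    have injG: "inj_on (mapP (col x y)) FO"
    proof (rule inj_onI)
      fix X Y assume "X \<in> FO" "Y \<in> FO" "mapP (col x y) X = mapP (col x y) Y"
      then show "X = Y" using FOout unc_col[OF xy(2)] unfolding mapP_def out_def
        by (metis prod.collapse prod.inject)
    qed
    have cardG: "card G = card FO" using injG G_def card_image by blast
    have FMs: "FM \<subseteq> F" unfolding FM_def by blast
    have finFM: "finite FM" using finite_subset[OF FMs finF] .
    have "card FO = card F - card FM" unfolding FO_def using card_Diff_subset[OF finFM FMs] .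
    moreover have "card FM \<le> card F" using card_mono[OF finF FMs] .
    ultimately have "card F = card FM + card FO" by simp
    then show ?thesis using IHM IHG cardG cL by linarith
  qed
qed


definition pr :: "nat set \<Rightarrow> nat \<times> nat" where "pr D = (Min D, Max D)"

lemma pr2: "x < y \<Longrightarrow> pr {x,y} = (x,y)"
  unfolding pr_def by (simp add: max_def min_def)

lemma diag_E:
  assumes "is_diag d N D"
  obtains x y where "D = {x,y}" "x < y" "y < N" "y - x > 1" "y - x < N - 1" "(d - 1) dvd (y - x - 1)"
  using assms unfolding is_diag_def by blast

lemma interleave_iff:
  assumes "x < y" "u < w"
  shows "interleave {x,y} {u,w} \<longleftrightarrow> x < u \<and> u < y \<and> y < w"
proof
  assume "interleave {x,y} {u,w}"
  then obtain a b c e where h: "{x,y} = {a,b}" "{u,w} = {c,e}" "a < c" "c < b" "b < e"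
    unfolding interleave_def by blast
  have "a = x \<and> b = y" using h(1,3,4) assms(1) by (auto simp: doubleton_eq_iff)
  moreover have "c = u \<and> e = w" using h(2,3,4,5) assms(2) by (auto simp: doubleton_eq_iff)
  ultimately show "x < u \<and> u < y \<and> y < w" using h by simp
next
  assume "x < u \<and> u < y \<and> y < w"
  then show "interleave {x,y} {u,w}" unfolding interleave_def by blast
qed

lemma crosses_iff:
  assumes "x < y" "u < w"
  shows "crosses {x,y} {u,w} \<longleftrightarrow> \<not> nc (x,y) (u,w)"
  unfolding crosses_def nc_def using interleave_iff[OF assms] interleave_iff[OF assms(2,1)] by auto

lemma diag_good:
  assumes "is_diag d N D" "m = d - 1"
  shows "goodI m 0 (N - 1) (pr D) \<and> pr D \<noteq> (0, N - 1)"
proof -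
  obtain x y where h: "D = {x,y}" "x < y" "y < N" "y - x > 1" "y - x < N - 1" "(d - 1) dvd (y - x - 1)"
    using diag_E[OF assms(1)] by blast
  then show ?thesis using assms(2) pr2[OF h(2)] unfolding goodI_def by auto
qed

lemma diag_pr_inj: "is_diag d N D \<Longrightarrow> is_diag d N E \<Longrightarrow> pr D = pr E \<Longrightarrow> D = E"
  by (metis diag_E pr2 prod.inject)

lemma diag_cross_nc:
  assumes "is_diag d N D" "is_diag d N E"
  shows "crosses D E \<longleftrightarrow> \<not> nc (pr D) (pr E)"
proof -
  obtain x y where h: "D = {x,y}" "x < y" using diag_E[OF assms(1)] by blast
  obtain u w where h2: "E = {u,w}" "u < w" using diag_E[OF assms(2)] by blast
  show ?thesis using crosses_iff[OF h(2) h2(2)] h h2 pr2 by simp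
qed

definition polyF :: "nat \<Rightarrow> nat set set \<Rightarrow> (nat \<times> nat) set" where
  "polyF N T = pr ` T \<union> {(0, N - 1)}"

lemma full_nc: "goodI m 0 b E \<Longrightarrow> nc E (0, b) \<and> nc (0, b) E"
  unfolding goodI_def nc_def by auto

lemma polyF_props:
  assumes "partial_angulation d N T" "m = d - 1" "N = m * l + 2" "l \<ge> 2" "m \<ge> 1"
  shows "\<forall>E\<in>polyF N T. goodI m 0 (N - 1) E" "lam (polyF N T)" "card (polyF N T) = card T + 1"
    "finite T"
proof -
  have dg: "\<forall>D\<in>T. is_diag d N D" "\<forall>D\<in>T. \<forall>E\<in>T. \<not> crosses D E"
    using assms(1) unfolding partial_angulation_def by auto
  have "m * l \<ge> 0" by simp
  have gfull: "goodI m 0 (N - 1) (0, N - 1)"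
  proof -
    have "m * l \<ge> 1 * 1" using assms(4,5) by (intro mult_mono) auto
    then show ?thesis unfolding goodI_def using assms(3) by auto
  qed
  show g: "\<forall>E\<in>polyF N T. goodI m 0 (N - 1) E"
    unfolding polyF_def using dg diag_good[OF _ assms(2)] gfull by auto
  show "lam (polyF N T)"
    unfolding lam_def
  proof (intro ballI)
    fix E E' assume E: "E \<in> polyF N T" and E': "E' \<in> polyF N T"
    show "nc E E'"
    proof (cases "E = (0, N - 1) \<or> E' = (0, N - 1)")
      case True
      then show ?thesis using full_nc g E E' by metis
    next
      case False
      then obtain D D' where "D \<in> T" "D' \<in> T" "E = pr D" "E' = pr D'"
        using E E' unfolding polyF_def by auto
      then show ?thesis using dg diag_cross_nc by metis
    qed
  qed
  have "T \<subseteq> Pow {..<N}" using dg(1) unfolding is_diag_def by auto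
  then show finT: "finite T" by (rule finite_subset) auto
  have inj: "inj_on pr T" using dg(1) diag_pr_inj by (metis inj_onI)
  have nin: "(0, N - 1) \<notin> pr ` T"
  proof
    assume "(0, N - 1) \<in> pr ` T"
    then obtain D where "D \<in> T" "(0, N - 1) = pr D" by auto
    then show False using diag_good[of d N D m] dg(1) assms(2) by auto
  qed
  show "card (polyF N T) = card T + 1"
    unfolding polyF_def using nin card_image[OF inj] finT by simp
qed

lemma nc_sym: "nc E E' \<longleftrightarrow> nc E' E" unfolding nc_def by auto
lemma nc_refl: "nc E E" unfolding nc_def by auto

lemma polyA:
  assumes "partial_angulation d N T" "m = d - 1" "N = m * l + 2" "l \<ge> 2" "m \<ge> 1"
  shows "card T + 1 \<le> l"
proof -
  note P = polyF_props[OF assms]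
  have "card (polyF N T) \<le> (N - 1 - 0 - 1) div m" using boundA[OF assms(5) P(1) P(2)] .
  also have "(N - 1 - 0 - 1) div m = l" using assms(3,5) by simp
  finally show ?thesis using P(3) by simp
qed

lemma polyB:
  assumes "angulation d N T" "m = d - 1" "N = m * l + 2" "l \<ge> 2" "m \<ge> 1"
  shows "l \<le> card T + 1"
proof -
  have pa: "partial_angulation d N T" using assms(1) unfolding angulation_def by simp
  note P = polyF_props[OF pa assms(2-5)]
  have dg: "\<forall>D\<in>T. is_diag d N D" "\<forall>D\<in>T. \<forall>E\<in>T. \<not> crosses D E"
    using pa unfolding partial_angulation_def by auto
  have mx: "\<forall>E. goodI m 0 (N - 1) E \<and> (\<forall>E'\<in>polyF N T. nc E E') \<longrightarrow> E \<in> polyF N T"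
  proof (intro allI impI)
    fix E assume H: "goodI m 0 (N - 1) E \<and> (\<forall>E'\<in>polyF N T. nc E E')"
    show "E \<in> polyF N T"
    proof (cases "E = (0, N - 1)")
      case True then show ?thesis unfolding polyF_def by simp
    next
      case False
      obtain u v where E: "E = (u,v)" by (cases E)
      have uv: "u < v" "v \<le> N - 1" "2 \<le> v - u" "m dvd (v - u - 1)"
        using H unfolding goodI_def E by auto
      have "v - u < N - 1" using False uv E by auto
      then have dD: "is_diag d N {u,v}" unfolding is_diag_def
      proof -
        assume "v - u < N - 1"
        moreover have "v < N" using uv(2) assms(3) by simp
        ultimately show "\<exists>x y. {u,v} = {x, y} \<and> x < y \<and> y < N \<and> y - x > 1 \<and> y - x < N - 1
           \<and> (d - 1) dvd (y - x - 1)" using uv assms(2) by (intro exI[of _ u] exI[of _ v]) auto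
      qed
      have prD: "pr {u,v} = E" using pr2[OF uv(1)] E by simp
      have "partial_angulation d N (insert {u,v} T)"
        unfolding partial_angulation_def
      proof (intro conjI ballI)
        fix D assume "D \<in> insert {u,v} T"
        then show "is_diag d N D" using dD dg by auto
      next
        fix D D' assume D: "D \<in> insert {u,v} T" and D': "D' \<in> insert {u,v} T"
        have dd: "is_diag d N D" "is_diag d N D'" using D D' dD dg by auto
        show "\<not> crosses D D'"
        proof (cases "D \<in> T \<and> D' \<in> T")
          case True then show ?thesis using dg(2) by blast
        next
          case False
          have "nc (pr D) (pr D')"
          proof (cases "D = {u,v}")
            case True
            show ?thesis
            proof (cases "D' = {u,v}")
              case True
              then show ?thesis using \<open>D = {u,v}\<close> nc_refl by simp
            next
              case False
              then have "pr D' \<in> polyF N T" using D' unfolding polyF_def by auto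
              then show ?thesis using H prD True by auto
            qed
          next
            case False
            then have DT: "D \<in> T" using D by auto
            then have D'e: "D' = {u,v}" using D' \<open>\<not> (D \<in> T \<and> D' \<in> T)\<close> by auto
            have "pr D \<in> polyF N T" using DT unfolding polyF_def by auto
            then have "nc E (pr D)" using H by blast
            then show ?thesis using D'e prD nc_sym by simp
          qed
          then show ?thesis using diag_cross_nc[OF dd] by simp
        qed
      qed
      then have "insert {u,v} T = T" using assms(1) unfolding angulation_def by blast
      then have "{u,v} \<in> T" by blast
      then show ?thesis using prD unfolding polyF_def by force
    qed
  qed
  have full: "(0, N - 1) \<in> polyF N T" unfolding polyF_def by simp
  have "l \<le> card (polyF N T)"
    using boundB_aux[OF assms(5) refl _ _ P(1) P(2) full mx, of l] assms(3,4) by simp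
  then show ?thesis using P(3) by simp
qed

lemma ang_of_card:
  assumes "partial_angulation d N T" "m = d - 1" "N = m * l + 2" "l \<ge> 2" "m \<ge> 1"
    "l \<le> card T + 1"
  shows "angulation d N T"
  unfolding angulation_def
proof (intro conjI allI impI)
  show "partial_angulation d N T" by fact
  fix T' assume H: "partial_angulation d N T' \<and> T \<subseteq> T'"
  have "card T' + 1 \<le> l" using polyA[OF _ assms(2-5)] H by blast
  moreover have "finite T'" using polyF_props(4)[OF _ assms(2-5)] H by blast
  moreover have "card T \<le> card T'" using card_mono H \<open>finite T'\<close> by blast
  ultimately have "card T = card T'" using assms(6) by linarith
  then show "T' = T" using card_subset_eq[OF \<open>finite T'\<close>] H by blast
qed


definition R :: "nat \<Rightarrow> nat \<Rightarrow> nat set \<Rightarrow> nat set" where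
  "R N a D = (\<lambda>x. (x + a) mod N) ` D"
definition rotS :: "nat \<Rightarrow> nat \<Rightarrow> nat set set \<Rightarrow> nat set set" where
  "rotS N a T = R N a ` T"

lemma R_add: "R N a (R N b D) = R N (b + a) D"
  unfolding R_def image_image by (simp add: mod_add_left_eq add.assoc)

lemma R_mod: "R N (a mod N) D = R N a D"
  unfolding R_def by (simp add: mod_add_right_eq)

lemma R_0: "D \<subseteq> {..<N} \<Longrightarrow> R N 0 D = D"
  unfolding R_def by (force simp: subset_iff)

lemma rotS_add: "rotS N a (rotS N b T) = rotS N (b + a) T"
  unfolding rotS_def image_image R_add ..

lemma rotS_0: "\<forall>D\<in>T. D \<subseteq> {..<N} \<Longrightarrow> rotS N 0 T = T"
  unfolding rotS_def using R_0 by (metis (no_types, lifting) image_cong image_ident)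

lemma rotS_mult: "\<forall>D\<in>T. D \<subseteq> {..<N} \<Longrightarrow> rotS N a T = T \<Longrightarrow> rotS N (c * a) T = T"
proof (induction c)
  case 0 then show ?case using rotS_0 by simp
next
  case (Suc c)
  have "rotS N (Suc c * a) T = rotS N a (rotS N (c * a) T)" using rotS_add by (simp add: add.commute)
  also have "\<dots> = T" using Suc by simp
  finally show ?case .
qed

lemma rotS_mod: "rotS N (a mod N) T = rotS N a T"
  unfolding rotS_def using R_mod by simp

lemma rho_pow:
  assumes "\<forall>D\<in>T. D \<subseteq> {..<N}" "N \<ge> 1"
  shows "(rho_set N ^^ j) T = rotS N (j * (N - 1)) T"
proof (induction j)
  case 0 then show ?case using rotS_0[OF assms(1)] by simp
next
  case (Suc j)
  have "(rho_set N ^^ Suc j) T = rho_set N (rotS N (j * (N - 1)) T)" using Suc by simp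
  also have "\<dots> = rotS N (N - 1) (rotS N (j * (N - 1)) T)"
  proof -
    have "rho N = R N (N - 1)" unfolding rho_def R_def using assms(2) by (intro ext) simp
    then show ?thesis unfolding rho_set_def rotS_def by simp
  qed
  also have "\<dots> = rotS N (Suc j * (N - 1)) T" using rotS_add by (simp add: add.commute)
  finally show ?case .
qed

lemma mod_lt2: "(z::nat) < 2 * N \<Longrightarrow> z mod N = (if z < N then z else z - N)"
proof (cases "z < N")
  case False
  assume "z < 2 * N"
  then have "z - N < N" using False by simp
  then show ?thesis using False by (simp add: le_mod_geq)
qed simp

lemma fix_half:
  assumes "x < y" "y < N" "0 < a" "a < N" "R N a {x,y} = {x,y}"
  shows "2 * a = N \<and> y = x + a"
proof -
  have "(x + a) mod N \<in> {x,y}" using assms(5) unfolding R_def by blast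
  moreover have "(x + a) mod N \<noteq> x"
    using mod_lt2[of "x + a" N] assms by (auto split: if_splits)
  ultimately have 1: "(x + a) mod N = y" by blast
  have "(y + a) mod N \<in> {x,y}" using assms(5) unfolding R_def by blast
  moreover have "(y + a) mod N \<noteq> y"
    using mod_lt2[of "y + a" N] assms by (auto split: if_splits)
  ultimately have 2: "(y + a) mod N = x" by blast
  show ?thesis using 1 2 mod_lt2[of "x + a" N] mod_lt2[of "y + a" N] assms
    by (auto split: if_splits)
qed

lemma diam_cross:
  assumes "x < y" "y < N" "x' < y'" "y' < N" "0 < a" "a < N"
    "R N a {x,y} = {x,y}" "R N a {x',y'} = {x',y'}" "{x,y} \<noteq> {x',y'}"
  shows "crosses {x,y} {x',y'}"
proof -
  have h1: "2 * a = N" "y = x + a" using fix_half[OF assms(1,2,5,6,7)] by auto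
  have h2: "y' = x' + a" using fix_half[OF assms(3,4,5,6,8)] by auto
  have "x \<noteq> x'" using h1 h2 assms(9) by auto
  then have "x < x' \<or> x' < x" by auto
  then show ?thesis
  proof
    assume "x < x'"
    then show ?thesis using crosses_iff[OF assms(1,3)] h1 h2 assms unfolding nc_def by auto
  next
    assume "x' < x"
    then show ?thesis using crosses_iff[OF assms(1,3)] h1 h2 assms unfolding nc_def by auto
  qed
qed

lemma orbit_dvd:
  assumes m1: "m \<ge> 1" and l2: "l \<ge> 2" and NN: "N = m * l + 2" and md: "m = d - 1"
    and ang: "angulation d N T" and inv1: "rotS N g T = T" and Nk: "N = k * g" and k3: "k \<ge> 3"
  shows "k dvd (l - 1)"
proof -
  have pa: "partial_angulation d N T" using ang unfolding angulation_def by simp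
  have dg: "\<forall>D\<in>T. is_diag d N D" "\<forall>D\<in>T. \<forall>E\<in>T. \<not> crosses D E"
    using pa unfolding partial_angulation_def by auto
  have sub: "\<forall>D\<in>T. D \<subseteq> {..<N}" using dg(1) unfolding is_diag_def by auto
  have Npos: "N > 0" using NN by simp
  then have gpos: "g > 0" using Nk by (cases g) auto
  have "k * g \<ge> 3 * g" using k3 by simp
  then have gN: "g < N" using Nk gpos by linarith
  have inv: "\<And>j. rotS N (j * g) T = T" using rotS_mult[OF sub inv1] .
  have inR: "\<And>D j. D \<in> T \<Longrightarrow> R N (j * g) D \<in> T"
  proof -
    fix D j assume "D \<in> T"
    then have "R N (j * g) D \<in> rotS N (j * g) T" unfolding rotS_def by blast
    then show "R N (j * g) D \<in> T" using inv by simp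
  qed
  have noFix: "\<And>E a. E \<in> T \<Longrightarrow> 0 < a \<Longrightarrow> a < N \<Longrightarrow> R N a E = E \<Longrightarrow> False"
  proof -
    fix E a assume ET: "E \<in> T" and a: "0 < a" "a < N" and fx: "R N a E = E"
    have dE: "is_diag d N E" using dg(1) ET by blast
    obtain x y where E: "E = {x,y}" "x < y" "y < N" by (rule diag_E[OF dE]) blast
    have "2 * a = N" using fix_half[OF E(2,3) a] fx E(1) by simp
    define E' where "E' = R N g E"
    have E'T: "E' \<in> T" using inR[OF ET, of 1] E'_def by simp
    have dE': "is_diag d N E'" using dg(1) E'T by blast
    obtain x' y' where E': "E' = {x',y'}" "x' < y'" "y' < N" by (rule diag_E[OF dE']) blast
    have fx': "R N a E' = E'" unfolding E'_def using R_add[of N a g E] R_add[of N g a E] fx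
      by (simp add: add.commute)
    have "E' \<noteq> E"
    proof
      assume "E' = E"
      then have "2 * g = N" using fix_half[OF E(2,3) gpos gN] E(1) E'_def by simp
      then show False using Nk k3 gpos by simp
    qed
    then have "crosses E E'" using diam_cross[OF E(2,3) E'(2,3) a] fx fx' E(1) E'(1) by simp
    then show False using dg(2) ET E'T by blast
  qed
  define orb where "orb = (\<lambda>D. (\<lambda>j. R N (j * g) D) ` {..<k})"
  have inj: "\<And>D. D \<in> T \<Longrightarrow> inj_on (\<lambda>j. R N (j * g) D) {..<k}"
  proof -
    fix D assume DT: "D \<in> T"
    have w: "\<And>i j. i < j \<Longrightarrow> j < k \<Longrightarrow> R N (i * g) D = R N (j * g) D \<Longrightarrow> False"
    proof -
      fix i j assume ij: "i < j" "j < k" and eq: "R N (i * g) D = R N (j * g) D"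
      define E where "E = R N (i * g) D"
      have ET: "E \<in> T" using inR[OF DT] E_def by simp
      have "R N ((j - i) * g) E = R N (i * g + (j - i) * g) D" unfolding E_def R_add ..
      also have "i * g + (j - i) * g = j * g" using ij by (simp add: add_mult_distrib[symmetric])
      finally have fx: "R N ((j - i) * g) E = E" using eq E_def by simp
      have "(j - i) * g < k * g" using ij gpos by simp
      moreover have "0 < (j - i) * g" using ij gpos by simp
      ultimately show False using noFix[OF ET _ _ fx] Nk by simp
    qed
    show "inj_on (\<lambda>j. R N (j * g) D) {..<k}"
    proof (rule inj_onI)
      fix i j assume "i \<in> {..<k}" "j \<in> {..<k}" "R N (i * g) D = R N (j * g) D"
      then have h: "i < k" "j < k" "R N (i * g) D = R N (j * g) D" by auto
      show "i = j"
      proof (rule linorder_cases[of i j])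
        assume "i < j" then show ?thesis using w h by blast
      next
        assume "j < i" then show ?thesis using w h by metis
      qed
    qed
  qed
  have card_orb: "\<And>D. D \<in> T \<Longrightarrow> card (orb D) = k"
    unfolding orb_def using inj card_image by fastforce
  have orbT: "\<And>D. D \<in> T \<Longrightarrow> orb D \<subseteq> T" unfolding orb_def using inR by auto
  have sub_orb: "\<And>D E. D \<in> T \<Longrightarrow> E \<in> orb D \<Longrightarrow> orb E \<subseteq> orb D"
  proof -
    fix D E assume DT: "D \<in> T" and EO: "E \<in> orb D"
    then obtain j where E: "E = R N (j * g) D" unfolding orb_def by auto
    show "orb E \<subseteq> orb D"
    proof
      fix X assume "X \<in> orb E"
      then obtain i where X: "X = R N (i * g) E" "i < k" unfolding orb_def by auto
      have "X = R N ((i + j) * g) D" unfolding X E R_add by (simp add: add_mult_distrib add.commute)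
      also have "\<dots> = R N (((i + j) * g) mod N) D" using R_mod by simp
      also have "((i + j) * g) mod N = ((i + j) mod k) * g" unfolding Nk by (rule mod_mult_mult2)
      finally have "X = R N (((i + j) mod k) * g) D" .
      moreover have "(i + j) mod k < k" using k3 by simp
      ultimately show "X \<in> orb D" unfolding orb_def by blast
    qed
  qed
  have finT: "finite T" using polyF_props(4)[OF pa md NN l2 m1] .
  have eq_orb: "\<And>D E. D \<in> T \<Longrightarrow> E \<in> orb D \<Longrightarrow> orb E = orb D"
  proof -
    fix D E assume DT: "D \<in> T" and EO: "E \<in> orb D"
    have ET: "E \<in> T" using orbT[OF DT] EO by blast
    have "finite (orb D)" unfolding orb_def by simp
    moreover have "card (orb E) = card (orb D)" using card_orb DT ET by simp
    ultimately show "orb E = orb D" using card_subset_eq sub_orb[OF DT EO] by blast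
  qed
  have selfo: "\<And>D. D \<in> T \<Longrightarrow> D \<in> orb D"
  proof -
    fix D assume "D \<in> T"
    then have "R N (0 * g) D = D" using R_0 sub by simp
    moreover have "(0::nat) < k" using k3 by simp
    ultimately show "D \<in> orb D" unfolding orb_def by force
  qed
  define C where "C = orb ` T"
  have UC: "\<Union>C = T" unfolding C_def using orbT selfo by blast
  have "k * card C = card (\<Union>C)"
  proof (rule card_partition)
    show "finite C" unfolding C_def using finT by simp
    show "finite (\<Union>C)" using UC finT by simp
    show "\<And>c. c \<in> C \<Longrightarrow> card c = k" unfolding C_def using card_orb by auto
    show "\<And>c1 c2. c1 \<in> C \<Longrightarrow> c2 \<in> C \<Longrightarrow> c1 \<noteq> c2 \<Longrightarrow> c1 \<inter> c2 = {}"
    proof -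
      fix c1 c2 assume c: "c1 \<in> C" "c2 \<in> C" "c1 \<noteq> c2"
      then obtain D1 D2 where D: "D1 \<in> T" "D2 \<in> T" "c1 = orb D1" "c2 = orb D2" unfolding C_def by auto
      show "c1 \<inter> c2 = {}"
      proof (rule ccontr)
        assume "c1 \<inter> c2 \<noteq> {}"
        then obtain X where "X \<in> orb D1" "X \<in> orb D2" using D by auto
        then have "orb X = orb D1" "orb X = orb D2" using eq_orb[of D1 X] eq_orb[of D2 X] D by blast+
        then show False using c D by simp
      qed
    qed
  qed
  then have "card T = k * card C" using UC by simp
  then have "k dvd card T" by simp
  moreover have "card T + 1 = l" using polyA[OF pa md NN l2 m1] polyB[OF ang md NN l2 m1] by simp
  ultimately have "card T = l - 1" "k dvd card T" by simp_all
  then show ?thesis by simp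
qed


lemma shape:
  fixes k q p m P N i j :: nat
  assumes "k \<ge> 1" "q \<ge> 1" "p \<ge> 1" "m \<ge> 1" "P = m * q + p" "N = k * P" "i < k" "1 \<le> j" "j \<le> q"
  shows "(\<not> (p = 1 \<and> i = k - 1 \<and> j = q) \<and> i * P + m * j + 1 < N) \<or>
         (p = 1 \<and> i = k - 1 \<and> j = q \<and> i * P + m * j + 1 = N)"
proof -
  have kP: "N = (k - 1) * P + P" using assms(1,6) by (cases k) auto
  have iP: "i * P \<le> (k - 1) * P" using assms(7) by (intro mult_le_mono1) simp
  have mj: "m * j \<le> m * q" using assms(9) by simp
  show ?thesis
  proof (cases "p = 1 \<and> i = k - 1 \<and> j = q")
    case True
    then show ?thesis using kP assms(5) by simp
  next
    case False
    have "i * P + m * j + 1 < N"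
    proof (cases "p \<ge> 2")
      case True
      then show ?thesis using kP iP mj assms(5) by linarith
    next
      case False2: False
      then have p1: "p = 1" using assms(3) by simp
      show ?thesis
      proof (cases "i < k - 1")
        case True
        then have "i * P + P \<le> (k - 1) * P" using mult_le_mono1[of "i + 1" "k - 1" P] by simp
        then show ?thesis using kP mj assms(3,5) by linarith
      next
        case False3: False
        then have "j < q" using False p1 assms(7,9) by auto
        then have "m * j + m \<le> m * q" using mult_le_mono2[of "j + 1" q m] by simp
        then show ?thesis using kP iP assms(3,4,5) by linarith
      qed
    qed
    then show ?thesis using False by simp
  qed
qed

lemma is_diagI: "x < y \<Longrightarrow> y < N \<Longrightarrow> y - x > 1 \<Longrightarrow> y - x < N - 1 \<Longrightarrow> (d - 1) dvd (y - x - 1)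
  \<Longrightarrow> is_diag d N {x,y}"
  unfolding is_diag_def by blast

lemma crosses_sym: "crosses D E \<longleftrightarrow> crosses E D" unfolding crosses_def by auto

lemma construct:
  fixes m l N d k q p P :: nat
  assumes m1: "m \<ge> 1" and l2: "l \<ge> 2" and NN: "N = m * l + 2" and md: "m = d - 1"
    and k1: "k \<ge> 1" and q1: "q \<ge> 1" and p1: "p \<ge> 1" and PP: "P = m * q + p" and NkP: "N = k * P"
    and fam: "(k * p = m + 2 \<and> k * q = l - 1) \<or> (k = 2 \<and> p = 1 \<and> 2 * q = l)"
  shows "\<exists>T. angulation d N T \<and> rotS N P T = T"
proof -
  define Dg where "Dg = (\<lambda>i j. {i * P, (i * P + m * j + 1) mod N})"
  define W where "W = (\<lambda>i j. p = 1 \<and> i = k - 1 \<and> j = q)"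
  define I where "I = {..<k} \<times> {1..q}"
  define T where "T = (\<lambda>(i,j). Dg i j) ` I"
  have mq: "m * q \<ge> 1" using mult_le_mono[OF m1 q1] by simp
  have P2: "P \<ge> 2" using mq p1 PP by linarith
  have nw: "\<And>i j. i < k \<Longrightarrow> 1 \<le> j \<Longrightarrow> j \<le> q \<Longrightarrow> \<not> W i j \<Longrightarrow>
      i * P + m * j + 1 < N \<and> Dg i j = {i * P, i * P + m * j + 1}"
  proof -
    fix i j assume h: "i < k" "1 \<le> j" "j \<le> q" "\<not> W i j"
    have "i * P + m * j + 1 < N" using shape[OF k1 q1 p1 m1 PP NkP h(1-3)] h(4) W_def by auto
    then show "i * P + m * j + 1 < N \<and> Dg i j = {i * P, i * P + m * j + 1}" unfolding Dg_def by simp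
  qed
  have Wk: "\<And>i j. W i j \<Longrightarrow> k \<ge> 2"
  proof -
    fix i j assume "W i j"
    then have "p = 1" using W_def by simp
    then show "k \<ge> 2" using fam m1 by auto
  qed
  have wr: "\<And>i j. W i j \<Longrightarrow> Dg i j = {0, (k - 1) * P} \<and> i = k - 1 \<and> j = q"
  proof -
    fix i j assume h: "W i j"
    then have ij: "i = k - 1" "j = q" "p = 1" using W_def by auto
    then have "i < k" using k1 by simp
    then have "i * P + m * j + 1 = N" using shape[OF k1 q1 p1 m1 PP NkP, of i j] ij q1 h W_def by auto
    then show "Dg i j = {0, (k - 1) * P} \<and> i = k - 1 \<and> j = q" unfolding Dg_def using ij by auto
  qed
  have F1: "\<And>i i' j. i < i' \<Longrightarrow> j \<le> q \<Longrightarrow> i * P + m * j + 1 \<le> i' * P"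
  proof -
    fix i i' j :: nat assume "i < i'" "j \<le> q"
    then have "(i + 1) * P \<le> i' * P" "m * j \<le> m * q" by (intro mult_le_mono1 mult_le_mono2, simp)+
    moreover have "(i + 1) * P = i * P + P" by simp
    ultimately show "i * P + m * j + 1 \<le> i' * P" using PP p1 by linarith
  qed
  have F2: "\<And>i. i < k \<Longrightarrow> i * P \<le> (k - 1) * P" by (intro mult_le_mono1) simp
  have diag: "\<And>i j. (i,j) \<in> I \<Longrightarrow> is_diag d N (Dg i j)"
  proof -
    fix i j assume "(i,j) \<in> I"
    then have h: "i < k" "1 \<le> j" "j \<le> q" unfolding I_def by auto
    show "is_diag d N (Dg i j)"
    proof (cases "W i j")
      case False
      note n = nw[OF h False]
      have "m * j \<le> m * q" using h(3) by simp
      moreover have "m * q + 2 < N"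
      proof (cases "k * p = m + 2 \<and> k * q = l - 1")
        case True
        have "m * l = m * (l - 1) + m" using l2 by (cases l) auto
        moreover have "m * (l - 1) \<ge> m * q"
        proof -
          have "1 * q \<le> k * q" using k1 by (rule mult_le_mono1)
          then have "q \<le> l - 1" using True by simp
          then show ?thesis by (rule mult_le_mono2)
        qed
        ultimately show ?thesis using NN m1 by linarith
      next
        case False
        then have "k = 2" "p = 1" "2 * q = l" using fam by auto
        then show ?thesis using NN mq by simp
      qed
      moreover have "m * j \<ge> 1" using mult_le_mono[OF m1 h(2)] by simp
      ultimately have A: "m * j + 1 < N - 1" "m * j \<ge> 1" by linarith+
      have B: "(i * P + m * j + 1) - i * P = m * j + 1" by simp
      have C: "(d - 1) dvd ((i * P + m * j + 1) - i * P - 1)" unfolding B using md by simp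
      show ?thesis unfolding is_diag_def
        by (intro exI[of _ "i * P"] exI[of _ "i * P + m * j + 1"] conjI)
           (use n A B C in \<open>simp_all\<close>)
    next
      case True
      have wD: "Dg i j = {0, (k - 1) * P}" using wr[OF True] by blast
      have k2: "k \<ge> 2" using Wk[OF True] .
      have p: "p = 1" using True W_def by simp
      have a: "(k - 1) * P < N" using NkP k1 P2 by (cases k) auto
      have b: "(k - 1) * P \<ge> P" using k2 by (cases k) auto
      have c: "(k - 1) * P + 1 < N" using NkP k2 P2 by (cases k) auto
      have dv: "m dvd (k - 1) * P - 1"
      proof -
        have e: "(k - 1) * P - 1 = (k - 1) * m * q + (k - 2)" using PP p k2
          by (cases k) (auto simp: algebra_simps)
        have "m dvd (k - 2)" using fam p m1 by auto
        then show ?thesis unfolding e by simp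
      qed
      have b2: "(k - 1) * P > 1" using b P2 by linarith
      have dv2: "(d - 1) dvd ((k - 1) * P - 0 - 1)" using dv md by simp
      have c2: "(k - 1) * P - 0 < N - 1" using c by linarith
      have "is_diag d N {0, (k - 1) * P}"
        by (rule is_diagI) (use a b2 c2 dv2 k2 P2 in \<open>simp_all\<close>)
      then show ?thesis using wD by simp
    qed
  qed
  have nx1: "\<And>i j i' j'. (i,j) \<in> I \<Longrightarrow> (i',j') \<in> I \<Longrightarrow> i \<le> i' \<Longrightarrow> \<not> W i j \<Longrightarrow> \<not> W i' j' \<Longrightarrow>
     \<not> crosses (Dg i j) (Dg i' j')"
  proof -
    fix i j i' j' assume a: "(i,j) \<in> I" "(i',j') \<in> I" "i \<le> i'" "\<not> W i j" "\<not> W i' j'"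
    have h: "i < k" "1 \<le> j" "j \<le> q" "i' < k" "1 \<le> j'" "j' \<le> q" using a unfolding I_def by auto
    note n = nw[OF h(1-3) a(4)] nw[OF h(4-6) a(5)]
    have lt: "i * P < i * P + m * j + 1" "i' * P < i' * P + m * j' + 1" by simp_all
    show "\<not> crosses (Dg i j) (Dg i' j')"
    proof (cases "i = i'")
      case True
      then show ?thesis using n crosses_iff[OF lt] unfolding nc_def by auto
    next
      case False
      then have "i * P + m * j + 1 \<le> i' * P" using F1 a(3) h(3) by simp
      then show ?thesis using n crosses_iff[OF lt] unfolding nc_def by auto
    qed
  qed
  have nx2: "\<And>i j i' j'. (i,j) \<in> I \<Longrightarrow> (i',j') \<in> I \<Longrightarrow> W i j \<Longrightarrow> \<not> W i' j' \<Longrightarrow>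
     \<not> crosses (Dg i j) (Dg i' j')"
  proof -
    fix i j i' j' assume a: "(i,j) \<in> I" "(i',j') \<in> I" "W i j" "\<not> W i' j'"
    have h: "i' < k" "1 \<le> j'" "j' \<le> q" using a unfolding I_def by auto
    note n = nw[OF h a(4)]
    note w = wr[OF a(3)]
    have k2: "k \<ge> 2" using Wk[OF a(3)] .
    have lt: "0 < (k - 1) * P" "i' * P < i' * P + m * j' + 1" using k2 P2 by simp_all
    have c: "i' = 0 \<or> i' * P + m * j' + 1 \<le> (k - 1) * P \<or> i' * P = (k - 1) * P"
    proof (cases "i' < k - 1")
      case True
      then show ?thesis using F1[of i' "k - 1" j'] h by simp
    next
      case False
      then have "i' = k - 1" using h by linarith
      then show ?thesis by simp
    qed
    show "\<not> crosses (Dg i j) (Dg i' j')"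
      using crosses_iff[OF lt] w n c unfolding nc_def by auto
  qed
  have noncross: "\<And>i j i' j'. (i,j) \<in> I \<Longrightarrow> (i',j') \<in> I \<Longrightarrow> \<not> crosses (Dg i j) (Dg i' j')"
  proof -
    fix i j i' j' assume a: "(i,j) \<in> I" "(i',j') \<in> I"
    show "\<not> crosses (Dg i j) (Dg i' j')"
    proof (cases "W i j")
      case True
      show ?thesis
      proof (cases "W i' j'")
        case True
        then have "Dg i j = Dg i' j'" using wr \<open>W i j\<close> by simp
        then show ?thesis unfolding crosses_def interleave_def by (auto simp: doubleton_eq_iff)
      next
        case False then show ?thesis using nx2 a True by blast
      qed
    next
      case False
      show ?thesis
      proof (cases "W i' j'")
        case True then show ?thesis using nx2[OF a(2,1) True False] crosses_sym by blast
      next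
        case False2: False
        show ?thesis
        proof (cases "i \<le> i'")
          case True then show ?thesis using nx1 a False False2 by blast
        next
          case False3: False
          then show ?thesis using nx1[OF a(2,1) _ False2 False] crosses_sym by simp
        qed
      qed
    qed
  qed
  have pa: "partial_angulation d N T"
    unfolding partial_angulation_def T_def using diag noncross by auto
  have rotDg: "\<And>i j. R N P (Dg i j) = Dg ((i + 1) mod k) j"
  proof -
    fix i j
    have e1: "(i * P + P) mod N = ((i + 1) mod k) * P"
      unfolding NkP using mod_mult_mult2[of "i + 1" P k] by (simp add: algebra_simps)
    have "((i * P + m * j + 1) mod N + P) mod N = (i * P + m * j + 1 + P) mod N"
      by (rule mod_add_left_eq)
    also have "i * P + m * j + 1 + P = (i * P + P) + (m * j + 1)" by simp
    also have "((i * P + P) + (m * j + 1)) mod N = (((i * P + P) mod N) + (m * j + 1)) mod N"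
      by (rule mod_add_left_eq[symmetric])
    finally have e2: "((i * P + m * j + 1) mod N + P) mod N = (((i + 1) mod k) * P + m * j + 1) mod N"
      unfolding e1 by (simp add: add.assoc)
    show "R N P (Dg i j) = Dg ((i + 1) mod k) j"
      unfolding R_def Dg_def using e1 e2 by simp
  qed
  have rot: "rotS N P T = T"
  proof
    show "rotS N P T \<subseteq> T"
    proof
      fix X assume "X \<in> rotS N P T"
      then obtain i j where X: "X = R N P (Dg i j)" "(i,j) \<in> I" unfolding rotS_def T_def by auto
      then have X2: "X = Dg ((i + 1) mod k) j" using rotDg by simp
      have "((i + 1) mod k, j) \<in> I" using X(2) k1 unfolding I_def by auto
      then show "X \<in> T" unfolding T_def X2 by (rule rev_image_eqI) simp
    qed
    show "T \<subseteq> rotS N P T"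
    proof
      fix X assume "X \<in> T"
      then obtain i j where X: "X = Dg i j" "(i,j) \<in> I" unfolding T_def by auto
      define i0 where "i0 = (i + k - 1) mod k"
      have "(i0 + 1) mod k = (i + k - 1 + 1) mod k" unfolding i0_def by (rule mod_add_left_eq)
      also have "\<dots> = (i + k) mod k" using k1 by simp
      also have "\<dots> = i" using X(2) unfolding I_def by simp
      finally have "X = R N P (Dg i0 j)" using rotDg X by simp
      moreover have "(i0, j) \<in> I"
      proof -
        have "i0 < k" unfolding i0_def using k1 by simp
        then show ?thesis using X(2) unfolding I_def by simp
      qed
      ultimately show "X \<in> rotS N P T" unfolding rotS_def T_def by blast
    qed
  qed
  define J where "J = {x \<in> I. \<not> (k = 2 \<and> W (fst x) (snd x))}"
  have injJ: "inj_on (\<lambda>(i,j). Dg i j) J"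
  proof (rule inj_onI)
    fix x y assume xJ: "x \<in> J" and yJ: "y \<in> J" and eq: "(\<lambda>(i,j). Dg i j) x = (\<lambda>(i,j). Dg i j) y"
    obtain i j where x: "x = (i,j)" by (cases x)
    obtain i' j' where y: "y = (i',j')" by (cases y)
    have h: "i < k" "1 \<le> j" "j \<le> q" "i' < k" "1 \<le> j'" "j' \<le> q" using xJ yJ x y unfolding J_def I_def by auto
    have e: "Dg i j = Dg i' j'" using eq x y by simp
    have mix: "\<And>a b a' b'. a < k \<Longrightarrow> 1 \<le> b \<Longrightarrow> b \<le> q \<Longrightarrow> \<not> W a b \<Longrightarrow> W a' b' \<Longrightarrow> k \<noteq> 2 \<Longrightarrow> Dg a b \<noteq> Dg a' b'"
    proof
      fix a b a' b' assume hh: "a < k" "1 \<le> b" "b \<le> q" "\<not> W a b" "W a' b'" "k \<noteq> 2" "Dg a b = Dg a' b'"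
      have k3: "k \<ge> 3" using Wk[OF hh(5)] hh(6) by simp
      note n = nw[OF hh(1-4)]
      note w = wr[OF hh(5)]
      have "(k - 1) * P \<ge> 2 * P" using k3 by (intro mult_le_mono1) simp
      moreover have "m * b + 1 \<le> P"
      proof -
        have "m * b \<le> m * q" using hh(3) by (rule mult_le_mono2)
        then show ?thesis using PP p1 by linarith
      qed
      moreover have "a * P < a * P + m * b + 1" by simp
      ultimately have "{a * P, a * P + m * b + 1} \<noteq> {0, (k - 1) * P}"
        using P2 by (auto simp: doubleton_eq_iff)
      moreover have e1: "Dg a b = {a * P, a * P + m * b + 1}" using n by blast
      moreover have e2: "Dg a' b' = {0, (k - 1) * P}" using w by blast
      ultimately show False using hh(7) by argo
    qed
    show "x = y"
    proof (cases "W i j")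
      case True
      show ?thesis
      proof (cases "W i' j'")
        case True
        have "i = k - 1" "j = q" "i' = k - 1" "j' = q" using wr[OF True] wr[OF \<open>W i j\<close>] by blast+
        then show ?thesis using x y by simp
      next
        case False
        have "k \<noteq> 2" using xJ x True unfolding J_def by auto
        then show ?thesis using mix[OF h(4-6) False True] e by simp
      qed
    next
      case False
      show ?thesis
      proof (cases "W i' j'")
        case True
        have "k \<noteq> 2" using yJ y True unfolding J_def by auto
        then show ?thesis using mix[OF h(1-3) False True] e by simp
      next
        case False2: False
        have "{i * P, i * P + m * j + 1} = {i' * P, i' * P + m * j' + 1}"
          using e nw[OF h(1-3) False] nw[OF h(4-6) False2] by simp
        then have "i * P = i' * P \<and> m * j = m * j'" by (auto simp: doubleton_eq_iff)
        then have "i = i' \<and> j = j'" using P2 m1 by simp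
        then show ?thesis using x y by simp
      qed
    qed
  qed
  have cardJ: "card J + 1 \<ge> l"
  proof (cases "k * p = m + 2 \<and> k * q = l - 1")
    case True
    have "J = I"
    proof -
      have "\<not> (k = 2 \<and> p = 1)" using True m1 by auto
      then show ?thesis unfolding J_def W_def by auto
    qed
    then have "card J = k * q" unfolding I_def by simp
    then show ?thesis using True by simp
  next
    case False
    then have f: "k = 2" "p = 1" "2 * q = l" using fam by auto
    have "J = I - {(1, q)}" unfolding J_def W_def using f by auto
    moreover have "(1, q) \<in> I" unfolding I_def using f q1 by auto
    ultimately have "card J = k * q - 1" unfolding I_def by (simp add: card_Diff_singleton)
    then show ?thesis using f q1 by simp
  qed
  have "card T \<ge> card J"
  proof -
    have "(\<lambda>(i,j). Dg i j) ` J \<subseteq> T" unfolding T_def J_def by auto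
    moreover have "finite T" unfolding T_def I_def by simp
    ultimately have "card ((\<lambda>(i,j). Dg i j) ` J) \<le> card T" by (rule card_mono[rotated])
    then show ?thesis using card_image[OF injJ] by simp
  qed
  then have "l \<le> card T + 1" using cardJ by simp
  then have "angulation d N T" using ang_of_card[OF pa md NN l2 m1] by simp
  then show ?thesis using rot by blast
qed


lemma coprime_ml2:
  fixes m l :: nat assumes "odd m" shows "coprime (m * l + 2) m"
proof -
  have "gcd m (l * m + 2) = gcd m 2" by (rule gcd_add_mult)
  moreover have "coprime m 2" using assms by simp
  then have "gcd m 2 = 1" by (simp add: coprime_iff_gcd_eq_1)
  ultimately show ?thesis by (simp add: coprime_iff_gcd_eq_1 gcd.commute mult.commute)
qed

lemma coprime_al1:
  fixes a l :: nat shows "coprime (a * l + 1) a"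
proof -
  have "gcd a (l * a + 1) = gcd a 1" by (rule gcd_add_mult)
  then show ?thesis by (simp add: coprime_iff_gcd_eq_1 gcd.commute mult.commute)
qed

lemma NTa:
  fixes m l n N :: nat
  assumes m1: "m \<ge> 1" and NN: "N = m * l + 2" and dv: "N dvd 2 * n * m"
  shows "N dvd 2 * n \<or> N dvd gcd (m + 2) (2 * (l - 1)) * n"
proof (cases "odd m")
  case True
  then have "coprime N m" using coprime_ml2 NN by simp
  then show ?thesis using dv coprime_dvd_mult_left_iff by blast
next
  case False
  then obtain a where a: "m = 2 * a" by (metis evenE)
  define M where "M = a * l + 1"
  have NM: "N = 2 * M" unfolding M_def NN a by simp
  have "2 * M dvd 2 * (2 * a * n)" using dv NM a by (simp add: ac_simps)
  then have "M dvd (2 * n) * a" by (simp add: ac_simps)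
  moreover have "coprime M a" unfolding M_def by (rule coprime_al1)
  ultimately have M2n: "M dvd 2 * n" using coprime_dvd_mult_left_iff by blast
  show ?thesis
  proof (cases "odd M")
    case True
    then have "coprime M 2" by simp
    then have "M dvd n" using M2n coprime_dvd_mult_right_iff by blast
    then show ?thesis using NM by simp
  next
    case False
    then have "odd (a * l)" unfolding M_def by simp
    then have ao: "odd a" "odd l" by auto
    have "4 dvd m + 2"
    proof -
      obtain b where "a = 2 * b + 1" using ao(1) oddE by blast
      then have e: "m + 2 = 4 * (b + 1)" using a by simp
      show ?thesis unfolding e by (rule dvd_triv_left)
    qed
    moreover have "4 dvd 2 * (l - 1)"
    proof -
      obtain b where "l = 2 * b + 1" using ao(2) oddE by blast
      then have e: "2 * (l - 1) = 4 * b" by simp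
      show ?thesis unfolding e by (rule dvd_triv_left)
    qed
    ultimately have "4 dvd gcd (m + 2) (2 * (l - 1))" by simp
    then have "4 * n dvd gcd (m + 2) (2 * (l - 1)) * n" by simp
    moreover have "N dvd 4 * n" using M2n NM by simp
    ultimately show ?thesis using dvd_trans by blast
  qed
qed

lemma NTb:
  fixes m l n N k g :: nat
  assumes m1: "m \<ge> 1" and l2: "l \<ge> 2" and NN: "N = m * l + 2" and Nk: "N = k * g"
    and gd: "g dvd n * m" and k1: "k dvd m + 2" and k2: "k dvd l - 1"
  shows "N dvd gcd (m + 2) (2 * (l - 1)) * n"
proof -
  obtain p where p: "m + 2 = k * p" using k1 by blast
  obtain q where q: "l - 1 = k * q" using k2 by blast
  have kpos: "k > 0" using p by (cases k) auto
  have "N = m * (l - 1) + (m + 2)" using NN l2 by (cases l) auto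
  then have "N = m * (k * q) + k * p" unfolding p q .
  then have "N = k * (m * q + p)" by (simp add: algebra_simps)
  then have g: "g = m * q + p" using Nk kpos by simp
  have d1: "g dvd n * m * q" using gd by simp
  have "g dvd n * g" by simp
  then have "g dvd n * m * q + n * p" unfolding g by (simp add: algebra_simps)
  then have np: "g dvd n * p" using d1 dvd_add_right_iff by blast
  have "g dvd n * p * q * k" using np by simp
  moreover have "n * p * q * k = n * m * q + 2 * n * q"
  proof -
    have "n * p * q * k = n * q * (k * p)" by (simp add: ac_simps)
    also have "\<dots> = n * q * (m + 2)" by (simp only: p)
    also have "\<dots> = n * m * q + 2 * n * q" by (simp add: algebra_simps)
    finally show ?thesis .
  qed
  ultimately have "g dvd n * m * q + 2 * n * q" by simp
  then have nq: "g dvd 2 * n * q" using d1 dvd_add_right_iff by blast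
  have "g dvd gcd (n * p) (n * (2 * q))" using np nq by (simp add: ac_simps)
  then have "g dvd n * gcd p (2 * q)" by (simp add: gcd_mult_distrib_nat)
  then have "k * g dvd k * (n * gcd p (2 * q))" by simp
  moreover have "gcd (m + 2) (2 * (l - 1)) = k * gcd p (2 * q)"
    unfolding p q by (simp add: gcd_mult_distrib_nat ac_simps)
  ultimately show ?thesis using Nk by (simp add: ac_simps)
qed

lemma NTc:
  fixes m l n N :: nat
  assumes m1: "m \<ge> 1" and l2: "l \<ge> 2" and NN: "N = m * l + 2"
    and H: "N dvd 2 * n \<or> N dvd gcd (m + 2) (2 * (l - 1)) * n"
  shows "(\<exists>k p q. k * p = m + 2 \<and> k * q = l - 1 \<and> (m * q + p) dvd (n * m)) \<or>
         (\<exists>q. 2 * q = l \<and> (m * q + 1) dvd (n * m))"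
proof -
  have Ne: "N = m * (l - 1) + (m + 2)" using NN l2 by (cases l) auto
  show ?thesis
  proof (cases "N dvd 2 * n")
    case True
    show ?thesis
    proof (cases "even l")
      case True
      then obtain q where q: "l = 2 * q" by (metis evenE)
      have eN: "N = 2 * (m * q + 1)" using NN q by simp
      have "2 * (m * q + 1) dvd 2 * n" using \<open>N dvd 2 * n\<close> unfolding eN .
      then have "(m * q + 1) dvd n" by (metis nat_mult_dvd_cancel1 zero_less_numeral)
      then have "(m * q + 1) dvd n * m" by simp
      then show ?thesis using q by auto
    next
      case False
      then obtain q where q: "l = 2 * q + 1" using oddE by blast
      show ?thesis
      proof (cases "even m")
        case True
        then obtain p where p: "m = 2 * p" by (metis evenE)
        have eN: "N = 2 * (m * q + (p + 1))" using NN q p by (simp add: algebra_simps)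
        have "2 * (m * q + (p + 1)) dvd 2 * n" using \<open>N dvd 2 * n\<close> unfolding eN .
        then have "(m * q + (p + 1)) dvd n" by (metis nat_mult_dvd_cancel1 zero_less_numeral)
        then have "(m * q + (p + 1)) dvd n * m" by simp
        moreover have "2 * (p + 1) = m + 2" "2 * q = l - 1" using p q by simp_all
        ultimately show ?thesis by blast
      next
        case False
        then have "odd N" using NN \<open>odd l\<close> by simp
        then have "coprime N 2" by simp
        then have "N dvd n" using \<open>N dvd 2 * n\<close> coprime_dvd_mult_right_iff by blast
        then have "(m * (l - 1) + (m + 2)) dvd n * m" using Ne by simp
        then have "1 * (m + 2) = m + 2 \<and> 1 * (l - 1) = l - 1 \<and> (m * (l - 1) + (m + 2)) dvd n * m" by simp
        then show ?thesis by blast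
      qed
    qed
  next
    case False
    define t where "t = gcd (m + 2) (2 * (l - 1))"
    have Nt: "N dvd t * n" using H False t_def by simp
    have tpos: "t > 0" unfolding t_def by simp
    show ?thesis
    proof (cases "t dvd l - 1")
      case True
      obtain p where p: "m + 2 = t * p" using t_def by (metis gcd_dvd1 dvdE)
      obtain q where q: "l - 1 = t * q" using True by blast
      have "N = m * (t * q) + t * p" using Ne unfolding p q .
      then have "N = t * (m * q + p)" by (simp add: algebra_simps)
      then have "(m * q + p) dvd n" using Nt tpos by simp
      then have "(m * q + p) dvd n * m" by simp
      then show ?thesis using p q by (metis mult.commute)
    next
      case False
      have "even t"
      proof (rule ccontr)
        assume "odd t"
        then have "coprime t 2" by simp
        moreover have "t dvd 2 * (l - 1)" unfolding t_def by simp
        ultimately have "t dvd l - 1" using coprime_dvd_mult_right_iff by blast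
        then show False using False by simp
      qed
      then obtain k where k: "t = 2 * k" by (metis evenE)
      have "2 * k dvd m + 2" using k t_def by (metis gcd_dvd1)
      then obtain p where p: "m + 2 = k * (2 * p)" by (metis dvdE mult.assoc mult.commute)
      have "2 * k dvd 2 * (l - 1)" using k t_def by (metis gcd_dvd2)
      then have "k dvd l - 1" by simp
      then obtain q where q: "l - 1 = k * q" by blast
      have "N = m * (k * q) + k * (2 * p)" using Ne unfolding p q .
      then have "N = k * (m * q + 2 * p)" by (simp add: algebra_simps)
      then have "k * (m * q + 2 * p) dvd k * (2 * n)" using Nt k by (simp add: ac_simps)
      then have P2n: "(m * q + 2 * p) dvd 2 * n" using tpos k by simp
      have "even m" using \<open>even t\<close> t_def
        by (metis dvd_add_triv_right_iff dvd_trans gcd_dvd1)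
      then have "2 * n dvd n * m" by auto
      then have "(m * q + 2 * p) dvd n * m" using P2n dvd_trans by blast
      then show ?thesis using p q by (metis mult.commute mult.assoc)
    qed
  qed
qed


lemma d1_case:
  assumes "n \<ge> 1"
  shows "(\<exists>T. angulation 1 ((1 - 1) * l + 2) T \<and>
            (rho_set ((1 - 1) * l + 2) ^^ (n * (1 - 1))) T = T)
         \<longleftrightarrow> (((1 - 1) * l + 2) dvd (2 * n) \<or>
              ((1 - 1) * l + 2) dvd (gcd (1 + 1) (2 * (l - 1)) * n))"
proof -
  have nd: "\<And>D. \<not> is_diag 1 2 D" unfolding is_diag_def by auto
  have "angulation 1 2 {}"
    unfolding angulation_def partial_angulation_def using nd by auto
  then have L: "\<exists>T. angulation 1 2 T \<and> (rho_set 2 ^^ 0) T = T" by auto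
  have e: "(1 - 1) * l + 2 = (2::nat)" "n * (1 - 1) = (0::nat)" by simp_all
  show ?thesis unfolding e using L by simp
qed

theorem mainTheorem9:
  fixes d l n :: nat
  assumes "d \<ge> 1" and "l \<ge> 2" and "n \<ge> 1"
  shows "(\<exists>T. angulation d ((d - 1) * l + 2) T \<and>
            (rho_set ((d - 1) * l + 2) ^^ (n * (d - 1))) T = T)
         \<longleftrightarrow> (((d - 1) * l + 2) dvd (2 * n) \<or>
              ((d - 1) * l + 2) dvd (gcd (d + 1) (2 * (l - 1)) * n))"
proof (cases "d = 1")
  case True
  then show ?thesis using d1_case[OF assms(3)] by simp
next
  case False
  define m where "m = d - 1"
  define N where "N = m * l + 2"
  have m1: "m \<ge> 1" using False assms(1) m_def by simp
  have d1: "d + 1 = m + 2" using assms(1) m_def by simp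
  have NN: "N = m * l + 2" by (rule N_def)
  have l2: "l \<ge> 2" by fact
  have N1: "N \<ge> 1" using NN by simp
  have subT: "\<And>T. angulation d N T \<Longrightarrow> \<forall>D\<in>T. D \<subseteq> {..<N}"
    unfolding angulation_def partial_angulation_def is_diag_def by auto
  have "(\<exists>T. angulation d N T \<and> (rho_set N ^^ (n * m)) T = T)
         \<longleftrightarrow> (N dvd (2 * n) \<or> N dvd (gcd (m + 2) (2 * (l - 1)) * n))"
  proof
    assume "\<exists>T. angulation d N T \<and> (rho_set N ^^ (n * m)) T = T"
    then obtain T where ang: "angulation d N T" and inv0: "(rho_set N ^^ (n * m)) T = T" by blast
    note sub = subT[OF ang]
    define r where "r = n * m * (N - 1)"
    have invr: "rotS N r T = T" using inv0 rho_pow[OF sub N1, of "n * m"] r_def by simp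
    define g where "g = gcd (n * m) N"
    have rpos: "r \<noteq> 0" unfolding r_def using assms(3) m1 NN by simp
    obtain x y where xy: "r * x = N * y + gcd r N" using bezout_nat[OF rpos] by blast
    have "gcd r N = g"
    proof -
      have "coprime N (N - 1)" using N1 coprime_diff_one_right_nat[of N] by simp
      then show ?thesis unfolding r_def g_def by (rule gcd_mult_left_right_cancel)
    qed
    then have xy2: "x * r = N * y + g" using xy by (simp add: mult.commute)
    have xr: "rotS N (x * r) T = T" using rotS_mult[OF sub invr] .
    have "rotS N g T = rotS N (g mod N) T" using rotS_mod[of N g T] by simp
    also have "g mod N = (N * y + g) mod N" by simp
    also have "rotS N ((N * y + g) mod N) T = rotS N (N * y + g) T" by (rule rotS_mod)
    also have "\<dots> = rotS N (x * r) T" using xy2 by simp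
    finally have invg: "rotS N g T = T" using xr by simp
    have gN: "g dvd N" unfolding g_def by simp
    have gnm: "g dvd n * m" unfolding g_def by simp
    have gpos: "g > 0" unfolding g_def using N1 by simp
    define k where "k = N div g"
    have Nk: "N = k * g" unfolding k_def using gN by simp
    show "N dvd (2 * n) \<or> N dvd (gcd (m + 2) (2 * (l - 1)) * n)"
    proof (cases "k \<ge> 3")
      case True
      have kl: "k dvd l - 1" using orbit_dvd[OF m1 l2 NN m_def ang invg Nk True] .
      have "N = m * (l - 1) + (m + 2)" using NN l2 by (cases l) auto
      moreover have "k dvd N" using Nk by simp
      ultimately have "k dvd m + 2" using kl by (metis dvd_add_right_iff dvd_mult)
      then show ?thesis using NTb[OF m1 l2 NN Nk gnm _ kl] by simp
    next
      case False
      have "N dvd 2 * g"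
      proof -
        have "k \<le> 2" using False by simp
        moreover have "k \<noteq> 0" using Nk N1 by auto
        ultimately have "k = 1 \<or> k = 2" by auto
        then show ?thesis using Nk by auto
      qed
      moreover have "2 * g dvd 2 * n * m" using gnm by (simp add: mult.assoc)
      ultimately have "N dvd 2 * n * m" using dvd_trans by blast
      then show ?thesis using NTa[OF m1 NN] by simp
    qed
  next
    assume H: "N dvd (2 * n) \<or> N dvd (gcd (m + 2) (2 * (l - 1)) * n)"
    have "\<exists>k p q. k \<ge> 1 \<and> q \<ge> 1 \<and> p \<ge> 1 \<and> N = k * (m * q + p) \<and> (m * q + p) dvd (n * m) \<and>
          ((k * p = m + 2 \<and> k * q = l - 1) \<or> (k = 2 \<and> p = 1 \<and> 2 * q = l))"
    proof -
      have Ne: "N = m * (l - 1) + (m + 2)" using NN l2 by (cases l) auto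
      from NTc[OF m1 l2 NN H] show ?thesis
      proof
        assume "\<exists>k p q. k * p = m + 2 \<and> k * q = l - 1 \<and> (m * q + p) dvd (n * m)"
        then obtain k p q where h: "k * p = m + 2" "k * q = l - 1" "(m * q + p) dvd (n * m)" by blast
        have "k \<ge> 1" "p \<ge> 1" using h(1) by (cases k; cases p; simp)+
        moreover have "q \<ge> 1" using h(2) l2 by (cases q) auto
        moreover have "N = k * (m * q + p)"
        proof -
          have "N = m * (k * q) + k * p" using Ne unfolding h(1,2) .
          then show ?thesis by (simp add: algebra_simps)
        qed
        ultimately show ?thesis using h by blast
      next
        assume "\<exists>q. 2 * q = l \<and> (m * q + 1) dvd (n * m)"
        then obtain q where h: "2 * q = l" "(m * q + 1) dvd (n * m)" by blast
        have "q \<ge> 1" using h(1) l2 by simp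
        moreover have "N = 2 * (m * q + 1)" using NN h(1) by simp
        ultimately show ?thesis using h by (intro exI[of _ 2] exI[of _ 1] exI[of _ q]) simp
      qed
    qed
    then obtain k p q where h: "k \<ge> 1" "q \<ge> 1" "p \<ge> 1" "N = k * (m * q + p)" "(m * q + p) dvd (n * m)"
      "(k * p = m + 2 \<and> k * q = l - 1) \<or> (k = 2 \<and> p = 1 \<and> 2 * q = l)" by blast
    obtain T where T: "angulation d N T" "rotS N (m * q + p) T = T"
      using construct[OF m1 l2 NN m_def h(1-3) refl h(4) h(6)] by blast
    note sub = subT[OF T(1)]
    obtain c where c: "n * m = (m * q + p) * c" using h(5) by blast
    have rr: "rotS N ((c * (N - 1)) * (m * q + p)) T = T" using rotS_mult[OF sub T(2)] .
    have eq: "(c * (N - 1)) * (m * q + p) = n * m * (N - 1)" unfolding c by (simp add: ac_simps)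
    have "rotS N (n * m * (N - 1)) T = T" using rr unfolding eq .
    then have "(rho_set N ^^ (n * m)) T = T" using rho_pow[OF sub N1, of "n * m"] by simp
    then show "\<exists>T. angulation d N T \<and> (rho_set N ^^ (n * m)) T = T" using T(1) by blast
  qed
  then show ?thesis unfolding N_def m_def using d1 m_def by (simp add: mult.commute)
qed


end
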